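(* Let $n\ge1$, $m\in\mathbb{Z}_{>0}$, $q,q_0,q_1\in(-1,1)$. Let $\boldsymbol{\xi}\in\mathbb{R}^n$ with $\xi_j\notin\pi\mathbb{Z}$ and $\xi_j\pm\xi_k\notin2\pi\mathbb{Z}$ ($j\ne k$) satisfy, for $j=1,\dots,n$, \[ e^{2i(m+1)\xi_j}=\frac{1-q_0e^{i\xi_j}}{e^{i\xi_j}-q_0}\cdot\frac{1-q_1e^{i\xi_j}}{e^{i\xi_j}-q_1}\prod_{k\ne j}\frac{1-qe^{i(\xi_j+\xi_k)}}{e^{i(\xi_j+\xi_k)}-q}\cdot\frac{1-qe^{i(\xi_j-\xi_k)}}{e^{i(\xi_j-\xi_k)}-q}. \] Then for every $\mu\in\mathbb{Z}^n$ with $\mu_1=m+1$, $P_{\texttt{b};\mu}(\boldsymbol{\xi};q,q_0)=q_1\,P_{\texttt{b};\mu-e_1}(\boldsymbol{\xi};q,q_0)$.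
   Context: $e_1,\dots,e_n$ is the standard basis of $\mathbb{R}^n$. $C_{\texttt{b}}(\boldsymbol{\xi};q,q_0)=\prod_{j=1}^n\frac{1-q_0e^{-i\xi_j}}{1-e^{-2i\xi_j}}\prod_{1\le j<k\le n}\frac{1-qe^{-i(\xi_j-\xi_k)}}{1-e^{-i(\xi_j-\xi_k)}}\cdot\frac{1-qe^{-i(\xi_j+\xi_k)}}{1-e^{-i(\xi_j+\xi_k)}}$ and $P_{\texttt{b};\mu}(\boldsymbol{\xi};q,q_0)=\sum_{\sigma\in S_n}\sum_{\epsilon\in\{1,-1\}^n}C_{\texttt{b}}(\epsilon_1\xi_{\sigma_1},\dots,\epsilon_n\xi_{\sigma_n};q,q_0)\exp(i\sum_j\epsilon_j\xi_{\sigma_j}\mu_j)$. *)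

theory Defs
  imports Complex_Main "HOL-Combinatorics.Permutations" "HOL-Library.FuncSet"
begin

text \<open>Indices are 0-based: the paper's coordinate j (1..n) is j-1 here.
  Vectors in R^n / Z^n are functions on nat, only the values on {..<n} matter.\<close>

definition Cb :: "nat \<Rightarrow> (nat \<Rightarrow> real) \<Rightarrow> real \<Rightarrow> real \<Rightarrow> complex" where
  "Cb n \<xi> q q0 =
     (\<Prod>j<n. (1 - of_real q0 * exp (- \<i> * of_real (\<xi> j))) / (1 - exp (- 2 * \<i> * of_real (\<xi> j))))
   * (\<Prod>j<n. \<Prod>k\<in>{j<..<n}.
        ((1 - of_real q * exp (- \<i> * of_real (\<xi> j - \<xi> k))) / (1 - exp (- \<i> * of_real (\<xi> j - \<xi> k))))
      * ((1 - of_real q * exp (- \<i> * of_real (\<xi> j + \<xi> k))) / (1 - exp (- \<i> * of_real (\<xi> j + \<xi> k)))))"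

definition Pb :: "nat \<Rightarrow> (nat \<Rightarrow> int) \<Rightarrow> (nat \<Rightarrow> real) \<Rightarrow> real \<Rightarrow> real \<Rightarrow> complex" where
  "Pb n \<mu> \<xi> q q0 =
     (\<Sum>\<sigma>\<in>{\<sigma>. \<sigma> permutes {..<n}}. \<Sum>\<epsilon>\<in>{..<n} \<rightarrow>\<^sub>E {1, -1::real}.
        Cb n (\<lambda>j. \<epsilon> j * \<xi> (\<sigma> j)) q q0
        * exp (\<i> * of_real (\<Sum>j<n. \<epsilon> j * \<xi> (\<sigma> j) * of_int (\<mu> j))))"

end

theory Submission
  imports Defs "HOL-Analysis.Complex_Transcendental"
begin

lemma exp_i_ne1:
  assumes "\<forall>z::int. s \<noteq> 2 * pi * of_int z"
  shows "exp (\<i> * complex_of_real s) \<noteq> 1"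
proof
  assume "exp (\<i> * complex_of_real s) = 1"
  then obtain k::int where "s = of_int (2*k) * pi" by (auto simp: exp_eq_1)
  then have "s = 2 * pi * of_int k" by simp
  with assms show False by blast
qed

lemma norm_ei: "norm (exp (\<i> * complex_of_real s)) = 1"
  by (simp add: norm_exp_i_times)

lemma ei_minus_q_ne0:
  assumes "\<bar>q\<bar> < 1"
  shows "exp (\<i> * complex_of_real s) - of_real q \<noteq> 0"
proof
  assume "exp (\<i> * complex_of_real s) - of_real q = 0"
  then have "norm (exp (\<i> * complex_of_real s)) = norm (complex_of_real q)" by simp
  then show False using assms by (simp add: norm_ei)
qed

lemma one_minus_q_ei_ne0:
  assumes "\<bar>q\<bar> < 1"
  shows "1 - of_real q * exp (\<i> * complex_of_real s) \<noteq> 0"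
proof
  assume "1 - of_real q * exp (\<i> * complex_of_real s) = 0"
  then have "norm (1::complex) = norm (complex_of_real q * exp (\<i> * complex_of_real s))" by simp
  then show False using assms by (simp add: norm_ei norm_mult)
qed

definition aa :: "real \<Rightarrow> real \<Rightarrow> complex" where
  "aa q0 s = (1 - of_real q0 * exp (- \<i> * of_real s)) / (1 - exp (- 2 * \<i> * of_real s))"
definition ff :: "real \<Rightarrow> real \<Rightarrow> complex" where
  "ff q s = (1 - of_real q * exp (- \<i> * of_real s)) / (1 - exp (- \<i> * of_real s))"

lemma Cb_alt: "Cb n x q q0 = (\<Prod>j<n. aa q0 (x j)) * (\<Prod>j<n. \<Prod>k\<in>{j<..<n}. ff q (x j - x k) * ff q (x j + x k))"
  unfolding Cb_def aa_def ff_def by simp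

definition Qf :: "nat \<Rightarrow> real \<Rightarrow> (nat \<Rightarrow> real) \<Rightarrow> real \<Rightarrow> complex" where
  "Qf n q x t = (\<Prod>k\<in>{0<..<n}. ff q (t - x k) * ff q (t + x k))"
definition Rr :: "nat \<Rightarrow> real \<Rightarrow> real \<Rightarrow> (nat \<Rightarrow> real) \<Rightarrow> complex" where
  "Rr n q q0 x = (\<Prod>j\<in>{1..<n}. aa q0 (x j)) * (\<Prod>j\<in>{1..<n}. \<Prod>k\<in>{j<..<n}. ff q (x j - x k) * ff q (x j + x k))"

lemma lessThan_split: "(n::nat) \<ge> 1 \<Longrightarrow> {..<n} = insert 0 {1..<n}" by (auto simp: set_eq_iff)

lemma Cb_split: "n \<ge> 1 \<Longrightarrow> Cb n x q q0 = aa q0 (x 0) * Qf n q x (x 0) * Rr n q q0 x"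
  unfolding Cb_alt Qf_def Rr_def
  by (simp add: lessThan_split prod.insert)

lemma Rr_upd: "Rr n q q0 (x(0:=t)) = Rr n q q0 x"
  unfolding Rr_def by (intro arg_cong2[where f="(*)"] prod.cong refl) auto

lemma Qf_upd: "Qf n q (x(0:=t)) s = Qf n q x s"
  unfolding Qf_def by (intro prod.cong refl) auto

definition Ee :: "nat \<Rightarrow> (nat \<Rightarrow> real) \<Rightarrow> (nat \<Rightarrow> int) \<Rightarrow> complex" where
  "Ee n x \<mu> = exp (\<i> * of_real (\<Sum>j<n. x j * of_int (\<mu> j)))"
definition Es :: "nat \<Rightarrow> (nat \<Rightarrow> real) \<Rightarrow> (nat \<Rightarrow> int) \<Rightarrow> complex" where
  "Es n x \<mu> = exp (\<i> * of_real (\<Sum>j\<in>{1..<n}. x j * of_int (\<mu> j)))"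

lemma E_split: "n \<ge> 1 \<Longrightarrow> Ee n x \<mu> = exp (\<i> * of_real (x 0 * of_int (\<mu> 0))) * Es n x \<mu>"
  unfolding Ee_def Es_def
  by (simp add: lessThan_split distrib_left exp_add)

lemma Es_upd: "Es n (x(0:=t)) (\<mu>(0:=v)) = Es n x \<mu>" "Es n x (\<mu>(0:=v)) = Es n x \<mu>"
  unfolding Es_def by (intro arg_cong[where f=exp] arg_cong[where f="\<lambda>y. \<i> * of_real y"] sum.cong refl; auto)+

lemma Pb_alt: "Pb n \<mu> \<xi> q q0 = (\<Sum>\<sigma>\<in>{\<sigma>. \<sigma> permutes {..<n}}. \<Sum>\<epsilon>\<in>{..<n} \<rightarrow>\<^sub>E {1, -1::real}.
        Cb n (\<lambda>j. \<epsilon> j * \<xi> (\<sigma> j)) q q0 * Ee n (\<lambda>j. \<epsilon> j * \<xi> (\<sigma> j)) \<mu>)"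
  unfolding Pb_def Ee_def by simp

lemma invol_sum_zero:
  fixes f :: "'a \<Rightarrow> complex"
  assumes "finite A" "\<And>a. a \<in> A \<Longrightarrow> g a \<in> A" "\<And>a. a \<in> A \<Longrightarrow> g (g a) = a"
    "\<And>a. a \<in> A \<Longrightarrow> f (g a) = - f a"
  shows "sum f A = 0"
proof -
  have "sum f A = sum (\<lambda>a. f (g a)) A"
    by (rule sum.reindex_bij_witness[where i=g and j=g]) (use assms in auto)
  also have "\<dots> = - sum f A" using assms(4) by (simp add: sum_negf)
  finally show ?thesis by simp
qed

lemma core_alg:
  fixes z Qp Qm H H' q0 q1 :: complex
  assumes z0: "z \<noteq> 0" and z2: "z^2 \<noteq> 1" and H'0: "H' \<noteq> 0" and QH: "Qp*H = Qm*H'"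
    and zq0: "z - q0 \<noteq> 0" and zq1: "z - q1 \<noteq> 0"
    and bethe: "z^(2*(m+1)) = (1 - q0*z)/(z-q0) * (1-q1*z)/(z-q1) * (H/H')"
  shows "(1 - q0*inverse z)/(1 - inverse z ^ 2) * Qp * (z^(m+1) - q1*z^m)
       + (1 - q0*z)/(1 - z^2) * Qm * (inverse z^(m+1) - q1 * inverse z ^ m) = 0"
proof -
  have z21: "z^2 - 1 \<noteq> 0" "1 - z^2 \<noteq> 0" using z2 by auto
  have Qm: "Qm = Qp*H/H'" using QH H'0 by (simp add: field_simps)
  have key: "(1-q0*z)*(1-q1*z)*(H/H') = z^(m+1)*z^(m+1)*(z-q0)*(z-q1)"
  proof -
    have "z^(m+1)*z^(m+1) = z^(2*(m+1))" by (simp add: power_add[symmetric] mult_2)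
    also have "\<dots> = (1 - q0*z)*(1-q1*z)*(H/H') / ((z-q0)*(z-q1))"
      using bethe by (simp add: field_simps)
    finally have e: "z^(m+1)*z^(m+1) = (1 - q0*z)*(1-q1*z)*(H/H') / ((z-q0)*(z-q1))" .
    have gen: "\<And>X Y d::complex. d \<noteq> 0 \<Longrightarrow> Y = X/d \<Longrightarrow> X = Y*d" by (simp add: field_simps)
    from gen[OF _ e] zq0 zq1 show ?thesis by (simp add: mult.assoc)
  qed
  have T1: "(1 - q0*inverse z)/(1 - inverse z ^ 2) = z*(z-q0)/(z^2-1)"
    using z0 z21 by (simp add: field_simps power2_eq_square)
  have T3: "inverse z^(m+1) - q1 * inverse z ^ m = (1 - q1*z)/z^(m+1)"
    using z0 by (simp add: field_simps power_inverse)
  have "(1 - q0*z)/(1 - z^2) * Qm * (inverse z^(m+1) - q1 * inverse z ^ m)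
      = - (Qp/(z^2-1)) * ((1-q0*z)*(1-q1*z)*(H/H')) / z^(m+1)"
  proof -
    have gen2: "\<And>a b d e f g h::complex. a/(-d) * (e*f/g) * (b/h) = -(e/d)*(a*b*(f/g))/h"
      by (simp add: divide_inverse mult_ac)
    have "1 - z^2 = -(z^2-1)" by simp
    then show ?thesis unfolding T3 Qm using gen2 by metis
  qed
  also have "\<dots> = - (Qp/(z^2-1)) * (z^(m+1)*(z-q0)*(z-q1))"
  proof -
    have gen3: "\<And>c W y::complex. W \<noteq> 0 \<Longrightarrow> c*(W*y)/W = c*y" by simp
    have "z^(m+1) \<noteq> 0" using z0 by simp
    from gen3[OF this] show ?thesis unfolding key by (simp only: mult.assoc)
  qed
  finally have S2: "(1 - q0*z)/(1 - z^2) * Qm * (inverse z^(m+1) - q1 * inverse z ^ m)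
      = - (Qp/(z^2-1)) * (z^(m+1)*(z-q0)*(z-q1))" .
  have S1: "(1 - q0*inverse z)/(1 - inverse z ^ 2) * Qp * (z^(m+1) - q1*z^m)
      = (Qp/(z^2-1)) * (z^(m+1)*(z-q0)*(z-q1))"
    unfolding T1 using z21 by (simp add: field_simps)
  show ?thesis unfolding S1 S2 by simp
qed

lemma ff_pair:
  assumes "exp (\<i> * complex_of_real s) \<noteq> 1"
  shows "ff q s * (1 - of_real q * exp (\<i> * of_real s)) = - (ff q (-s) * (exp (\<i> * of_real s) - of_real q))"
proof -
  define E where "E = exp (\<i> * complex_of_real s)"
  have E0: "E \<noteq> 0" unfolding E_def by simp
  have E1: "1 - E \<noteq> 0" "E - 1 \<noteq> 0" using assms unfolding E_def by auto
  have m: "exp (- \<i> * complex_of_real s) = inverse E" unfolding E_def by (simp add: exp_minus[symmetric])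
  have p: "exp (- \<i> * complex_of_real (-s)) = E" unfolding E_def by simp
  show ?thesis unfolding ff_def m p E_def[symmetric] using E0 E1
    by (simp add: field_simps)
qed

lemma ff_pair2:
  assumes "exp (\<i> * complex_of_real (t - u)) \<noteq> 1" "exp (\<i> * complex_of_real (t + u)) \<noteq> 1"
  shows "ff q (t - u) * ff q (t + u) * ((1 - of_real q * exp (\<i> * of_real (t + u))) * (1 - of_real q * exp (\<i> * of_real (t - u))))
       = ff q (-t - u) * ff q (-t + u) * ((exp (\<i> * of_real (t + u)) - of_real q) * (exp (\<i> * of_real (t - u)) - of_real q))"
proof -
  have a: "ff q (-t - u) = ff q (-(t+u))" "ff q (-t + u) = ff q (-(t-u))" by (simp_all add: algebra_simps)
  have g: "\<And>a1 a2 X Z b1 b2 Y W::complex. a1*X = -(b1*Y) \<Longrightarrow> a2*Z = -(b2*W) \<Longrightarrow> a1*a2*(Z*X) = b2*b1*(W*Y)"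
  proof -
    fix a1 a2 X Z b1 b2 Y W :: complex
    assume h: "a1*X = -(b1*Y)" "a2*Z = -(b2*W)"
    have "a1*a2*(Z*X) = (a1*X)*(a2*Z)" by (simp add: ac_simps)
    also have "\<dots> = b2*b1*(W*Y)" unfolding h by (simp add: ac_simps)
    finally show "a1*a2*(Z*X) = b2*b1*(W*Y)" .
  qed
  show ?thesis unfolding a by (rule g[OF ff_pair[OF assms(1)] ff_pair[OF assms(2)]])
qed

definition hh :: "real \<Rightarrow> real \<Rightarrow> real \<Rightarrow> complex" where
  "hh q t u = (1 - of_real q * exp (\<i> * of_real (t + u))) * (1 - of_real q * exp (\<i> * of_real (t - u)))"
definition hdd :: "real \<Rightarrow> real \<Rightarrow> real \<Rightarrow> complex" where
  "hdd q t u = (exp (\<i> * of_real (t + u)) - of_real q) * (exp (\<i> * of_real (t - u)) - of_real q)"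
definition Phi :: "nat \<Rightarrow> real \<Rightarrow> real \<Rightarrow> real \<Rightarrow> nat \<Rightarrow> (nat \<Rightarrow> real) \<Rightarrow> real \<Rightarrow> complex" where
  "Phi n q q0 q1 m x t = aa q0 t * Qf n q x t *
     (exp (\<i> * of_real (t * of_int (int m + 1))) - of_real q1 * exp (\<i> * of_real (t * of_int (int m))))"

lemma phi_pair:
  assumes q: "\<bar>q\<bar> < 1" and q0: "\<bar>q0\<bar> < 1" and q1: "\<bar>q1\<bar> < 1"
    and tpi: "\<forall>z::int. t \<noteq> pi * of_int z"
    and tk: "\<forall>k\<in>{0<..<n}. exp (\<i> * complex_of_real (t - x k)) \<noteq> 1 \<and> exp (\<i> * complex_of_real (t + x k)) \<noteq> 1"
    and bethe: "exp (2 * \<i> * of_nat (m + 1) * of_real t) =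
           (1 - of_real q0 * exp (\<i> * of_real t)) / (exp (\<i> * of_real t) - of_real q0)
         * (1 - of_real q1 * exp (\<i> * of_real t)) / (exp (\<i> * of_real t) - of_real q1)
         * (\<Prod>k\<in>{0<..<n}. hh q t (x k) / hdd q t (x k))"
  shows "Phi n q q0 q1 m x t + Phi n q q0 q1 m x (-t) = 0"
proof -
  define z where "z = exp (\<i> * complex_of_real t)"
  define H where "H = (\<Prod>k\<in>{0<..<n}. hh q t (x k))"
  define H' where "H' = (\<Prod>k\<in>{0<..<n}. hdd q t (x k))"
  have z0: "z \<noteq> 0" unfolding z_def by simp
  have z2: "z^2 \<noteq> 1"
  proof -
    have "z^2 = exp (\<i> * complex_of_real (2*t))"
      unfolding z_def by (simp add: power2_eq_square exp_add[symmetric] algebra_simps)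
    moreover have "\<forall>k::int. 2*t \<noteq> 2 * pi * of_int k" using tpi by auto
    ultimately show ?thesis using exp_i_ne1 by metis
  qed
  have "\<forall>k\<in>{0<..<n}. hdd q t (x k) \<noteq> 0" unfolding hdd_def mult_eq_0_iff de_Morgan_disj
    using ei_minus_q_ne0[OF q] by blast
  then have H'0: "H' \<noteq> 0" unfolding H'_def by (simp add: prod_zero_iff)
  have zq0: "z - of_real q0 \<noteq> 0" "z - of_real q1 \<noteq> 0" unfolding z_def
    using ei_minus_q_ne0[OF q0] ei_minus_q_ne0[OF q1] by auto
  have QH: "Qf n q x t * H = Qf n q x (-t) * H'"
    unfolding Qf_def H_def H'_def prod.distrib[symmetric] hh_def hdd_def
    by (intro prod.cong refl ff_pair2) (use tk in auto)
  have b2: "z^(2*(m+1)) = (1 - of_real q0*z)/(z-of_real q0) * (1-of_real q1*z)/(z-of_real q1) * (H/H')"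
  proof -
    have "exp (2 * \<i> * of_nat (m + 1) * of_real t) = exp (of_nat (2*(m+1)) * (\<i> * of_real t))"
      by (simp add: algebra_simps)
    then have "exp (2 * \<i> * of_nat (m + 1) * of_real t) = z^(2*(m+1))"
      unfolding z_def exp_of_nat_mult .
    then show ?thesis using bethe unfolding H_def H'_def z_def[symmetric] prod_dividef by simp
  qed
  have a1: "aa q0 t = (1 - of_real q0*inverse z)/(1 - inverse z ^ 2)"
    unfolding aa_def z_def
    by (simp add: exp_minus[symmetric] power2_eq_square exp_add[symmetric] algebra_simps)
  have a2: "aa q0 (-t) = (1 - of_real q0*z)/(1 - z ^ 2)"
    unfolding aa_def z_def
    by (simp add: power2_eq_square exp_add[symmetric] algebra_simps)
  have e: "\<And>k::nat. exp (\<i> * complex_of_real (t * of_int (int k))) = z^k"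
          "\<And>k::nat. exp (\<i> * complex_of_real (-t * of_int (int k))) = inverse z^k"
  proof -
    fix k :: nat
    show "exp (\<i> * complex_of_real (t * of_int (int k))) = z^k"
      unfolding z_def exp_of_nat_mult[symmetric] by (simp add: algebra_simps)
    show "exp (\<i> * complex_of_real (-t * of_int (int k))) = inverse z^k"
      unfolding z_def exp_of_nat_mult[symmetric] exp_minus[symmetric] by (simp add: algebra_simps)
  qed
  have e1: "exp (\<i> * complex_of_real (t * of_int (int m + 1))) = z^(m+1)"
          "exp (\<i> * complex_of_real (-t * of_int (int m + 1))) = inverse z^(m+1)"
    using e[of "m+1"] by (simp_all add: ac_simps)
  show ?thesis unfolding Phi_def a1 a2 e1 e
    by (rule core_alg[OF z0 z2 H'0 QH zq0 b2])
qed

lemma Phi_upd: "Phi n q q0 q1 m (x(0:=s)) t = Phi n q q0 q1 m x t"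
  unfolding Phi_def Qf_upd ..

lemma hh_sign: "e \<in> {1, -1} \<Longrightarrow> hh q t (e * u) = hh q t u"
  unfolding hh_def by (auto simp: algebra_simps)
lemma hdd_sign: "e \<in> {1, -1} \<Longrightarrow> hdd q t (e * u) = hdd q t u"
  unfolding hdd_def by (auto simp: algebra_simps)

lemma G_form:
  assumes "n \<ge> 1" "\<mu> 0 = int m + 1"
  shows "Cb n x q q0 * Ee n x \<mu> - of_real q1 * (Cb n x q q0 * Ee n x (\<mu>(0:=\<mu> 0 - 1)))
       = Rr n q q0 x * Es n x \<mu> * Phi n q q0 q1 m x (x 0)"
  unfolding Cb_split[OF assms(1)] E_split[OF assms(1)] Es_upd Phi_def assms(2)
  by (simp add: algebra_simps)

lemma sigma_sum:
  fixes n m :: nat and q q0 q1 :: real and \<xi> :: "nat \<Rightarrow> real" and \<mu> :: "nat \<Rightarrow> int"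
  assumes n1: "n \<ge> 1"
    and q: "\<bar>q\<bar> < 1" and q0: "\<bar>q0\<bar> < 1" and q1: "\<bar>q1\<bar> < 1"
    and tpi: "\<forall>j<n. \<forall>z::int. \<xi> j \<noteq> pi * of_int z"
    and pr: "\<forall>j<n. \<forall>k<n. j \<noteq> k \<longrightarrow> (\<forall>z::int. \<xi> j + \<xi> k \<noteq> 2 * pi * of_int z \<and> \<xi> j - \<xi> k \<noteq> 2 * pi * of_int z)"
    and bethe: "\<forall>j<n. exp (2 * \<i> * of_nat (m + 1) * of_real (\<xi> j)) =
           (1 - of_real q0 * exp (\<i> * of_real (\<xi> j))) / (exp (\<i> * of_real (\<xi> j)) - of_real q0)
         * (1 - of_real q1 * exp (\<i> * of_real (\<xi> j))) / (exp (\<i> * of_real (\<xi> j)) - of_real q1)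
         * (\<Prod>k\<in>{..<n} - {j}.
              (1 - of_real q * exp (\<i> * of_real (\<xi> j + \<xi> k))) / (exp (\<i> * of_real (\<xi> j + \<xi> k)) - of_real q)
            * (1 - of_real q * exp (\<i> * of_real (\<xi> j - \<xi> k))) / (exp (\<i> * of_real (\<xi> j - \<xi> k)) - of_real q))"
    and mu: "\<mu> 0 = int m + 1"
    and sig: "\<sigma> permutes {..<n}"
  shows "(\<Sum>\<epsilon>\<in>{..<n} \<rightarrow>\<^sub>E {1, -1::real}.
      Cb n (\<lambda>j. \<epsilon> j * \<xi> (\<sigma> j)) q q0 * Ee n (\<lambda>j. \<epsilon> j * \<xi> (\<sigma> j)) \<mu>
      - of_real q1 * (Cb n (\<lambda>j. \<epsilon> j * \<xi> (\<sigma> j)) q q0 * Ee n (\<lambda>j. \<epsilon> j * \<xi> (\<sigma> j)) (\<mu>(0:=\<mu> 0 - 1)))) = 0"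
proof -
  define X where "X = (\<lambda>\<epsilon>::nat\<Rightarrow>real. \<lambda>j. \<epsilon> j * \<xi> (\<sigma> j))"
  define j where "j = \<sigma> 0"
  have n0: "0 < n" using n1 by simp
  have jn: "j < n" unfolding j_def using permutes_in_image[OF sig, of 0] n0 by simp
  have injs: "inj \<sigma>" using sig by (rule permutes_inj)
  have img: "\<sigma> ` {0<..<n} = {..<n} - {j}"
  proof -
    have "{0<..<n} = {..<n} - {0}" by auto
    then have "\<sigma> ` {0<..<n} = \<sigma> ` {..<n} - {\<sigma> 0}" using injs by (simp add: image_set_diff)
    then show ?thesis unfolding j_def using permutes_image[OF sig] by simp
  qed
  have skn: "\<And>k. k \<in> {0<..<n} \<Longrightarrow> \<sigma> k < n \<and> \<sigma> k \<noteq> j"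
    using img by blast
  let ?G = "\<lambda>\<epsilon>. Rr n q q0 (X \<epsilon>) * Es n (X \<epsilon>) \<mu> * Phi n q q0 q1 m (X \<epsilon>) (X \<epsilon> 0)"
  have key: "Phi n q q0 q1 m (X \<epsilon>) (\<xi> j) + Phi n q q0 q1 m (X \<epsilon>) (- \<xi> j) = 0"
    if eps: "\<epsilon> \<in> {..<n} \<rightarrow>\<^sub>E {1, -1::real}" for \<epsilon>
  proof (rule phi_pair[OF q q0 q1])
    show "\<forall>z::int. \<xi> j \<noteq> pi * of_int z" using tpi jn by blast
    show "\<forall>k\<in>{0<..<n}. exp (\<i> * complex_of_real (\<xi> j - X \<epsilon> k)) \<noteq> 1 \<and> exp (\<i> * complex_of_real (\<xi> j + X \<epsilon> k)) \<noteq> 1"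
    proof
      fix k assume k: "k \<in> {0<..<n}"
      have ek: "\<epsilon> k = 1 \<or> \<epsilon> k = -1" using eps k by auto
      have p: "\<forall>z::int. \<xi> j + \<xi> (\<sigma> k) \<noteq> 2 * pi * of_int z \<and> \<xi> j - \<xi> (\<sigma> k) \<noteq> 2 * pi * of_int z"
        using pr jn skn[OF k] by metis
      have a: "\<forall>z::int. \<xi> j + \<xi> (\<sigma> k) \<noteq> 2 * pi * of_int z" "\<forall>z::int. \<xi> j - \<xi> (\<sigma> k) \<noteq> 2 * pi * of_int z"
        using p by auto
      show "exp (\<i> * complex_of_real (\<xi> j - X \<epsilon> k)) \<noteq> 1 \<and> exp (\<i> * complex_of_real (\<xi> j + X \<epsilon> k)) \<noteq> 1"
        using ek exp_i_ne1[OF a(1)] exp_i_ne1[OF a(2)] unfolding X_def by auto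
    qed
    have "(\<Prod>k\<in>{0<..<n}. hh q (\<xi> j) (X \<epsilon> k) / hdd q (\<xi> j) (X \<epsilon> k))
        = (\<Prod>k\<in>{0<..<n}. hh q (\<xi> j) (\<xi> (\<sigma> k)) / hdd q (\<xi> j) (\<xi> (\<sigma> k)))"
    proof (rule prod.cong[OF refl])
      fix k assume k: "k \<in> {0<..<n}"
      have ek: "\<epsilon> k \<in> {1, -1}" using eps k by auto
      show "hh q (\<xi> j) (X \<epsilon> k) / hdd q (\<xi> j) (X \<epsilon> k) = hh q (\<xi> j) (\<xi> (\<sigma> k)) / hdd q (\<xi> j) (\<xi> (\<sigma> k))"
        unfolding X_def hh_sign[OF ek] hdd_sign[OF ek] ..
    qed
    also have "\<dots> = (\<Prod>l\<in>{..<n} - {j}. hh q (\<xi> j) (\<xi> l) / hdd q (\<xi> j) (\<xi> l))"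
      unfolding img[symmetric] by (simp add: prod.reindex inj_on_subset[OF injs subset_UNIV])
    also have "\<dots> = (\<Prod>k\<in>{..<n} - {j}.
              (1 - of_real q * exp (\<i> * of_real (\<xi> j + \<xi> k))) / (exp (\<i> * of_real (\<xi> j + \<xi> k)) - of_real q)
            * (1 - of_real q * exp (\<i> * of_real (\<xi> j - \<xi> k))) / (exp (\<i> * of_real (\<xi> j - \<xi> k)) - of_real q))"
      unfolding hh_def hdd_def by (intro prod.cong refl) (simp add: divide_inverse mult_ac)
    finally have pe: "(\<Prod>k\<in>{0<..<n}. hh q (\<xi> j) (X \<epsilon> k) / hdd q (\<xi> j) (X \<epsilon> k)) = \<dots>" .
    show "exp (2 * \<i> * of_nat (m + 1) * of_real (\<xi> j)) =
           (1 - of_real q0 * exp (\<i> * of_real (\<xi> j))) / (exp (\<i> * of_real (\<xi> j)) - of_real q0)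
         * (1 - of_real q1 * exp (\<i> * of_real (\<xi> j))) / (exp (\<i> * of_real (\<xi> j)) - of_real q1)
         * (\<Prod>k\<in>{0<..<n}. hh q (\<xi> j) (X \<epsilon> k) / hdd q (\<xi> j) (X \<epsilon> k))"
      unfolding pe using bethe jn by blast
  qed
  show ?thesis
  proof (rule invol_sum_zero[where g="\<lambda>\<epsilon>. \<epsilon>(0 := - \<epsilon> 0)"])
    show "finite ({..<n} \<rightarrow>\<^sub>E {1, -1::real})" by (simp add: finite_PiE)
  next
    fix \<epsilon> assume e: "\<epsilon> \<in> {..<n} \<rightarrow>\<^sub>E {1, -1::real}"
    show "\<epsilon>(0 := - \<epsilon> 0) \<in> {..<n} \<rightarrow>\<^sub>E {1, -1}" using e n0 by (auto simp: PiE_iff extensional_def)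
    show "(\<epsilon>(0 := - \<epsilon> 0))(0 := - (\<epsilon>(0 := - \<epsilon> 0)) 0) = \<epsilon>" by simp
    have XG: "\<And>e. Cb n (X e) q q0 * Ee n (X e) \<mu> - of_real q1 * (Cb n (X e) q q0 * Ee n (X e) (\<mu>(0:=\<mu> 0 - 1))) = ?G e"
      by (rule G_form[where \<mu>=\<mu>, OF n1 mu])
    have Xf: "X (\<epsilon>(0 := - \<epsilon> 0)) = (X \<epsilon>)(0 := - X \<epsilon> 0)" unfolding X_def by auto
    have e0: "\<epsilon> 0 = 1 \<or> \<epsilon> 0 = -1" using e n0 by auto
    have sum0: "Phi n q q0 q1 m (X \<epsilon>) (X \<epsilon> 0) + Phi n q q0 q1 m (X \<epsilon>) (- X \<epsilon> 0) = 0"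
      using e0 key[OF e] unfolding X_def j_def by (auto simp: add.commute)
    have "?G (\<epsilon>(0 := - \<epsilon> 0)) = Rr n q q0 (X \<epsilon>) * Es n (X \<epsilon>) \<mu> * Phi n q q0 q1 m (X \<epsilon>) (- X \<epsilon> 0)"
      unfolding Xf Rr_upd Phi_upd by (simp add: Es_upd(1)[of n "X \<epsilon>" "- X \<epsilon> 0" \<mu> "\<mu> 0", simplified])
    also have "\<dots> = - ?G \<epsilon>" proof -
      have "Phi n q q0 q1 m (X \<epsilon>) (- X \<epsilon> 0) = - Phi n q q0 q1 m (X \<epsilon>) (X \<epsilon> 0)"
        using sum0 by (simp add: eq_neg_iff_add_eq_0 add.commute)
      then show ?thesis by simp
    qed
    finally show "Cb n (\<lambda>j. (\<epsilon>(0 := - \<epsilon> 0)) j * \<xi> (\<sigma> j)) q q0 * Ee n (\<lambda>j. (\<epsilon>(0 := - \<epsilon> 0)) j * \<xi> (\<sigma> j)) \<mu>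
      - of_real q1 * (Cb n (\<lambda>j. (\<epsilon>(0 := - \<epsilon> 0)) j * \<xi> (\<sigma> j)) q q0 * Ee n (\<lambda>j. (\<epsilon>(0 := - \<epsilon> 0)) j * \<xi> (\<sigma> j)) (\<mu>(0:=\<mu> 0 - 1)))
      = - (Cb n (\<lambda>j. \<epsilon> j * \<xi> (\<sigma> j)) q q0 * Ee n (\<lambda>j. \<epsilon> j * \<xi> (\<sigma> j)) \<mu>
      - of_real q1 * (Cb n (\<lambda>j. \<epsilon> j * \<xi> (\<sigma> j)) q q0 * Ee n (\<lambda>j. \<epsilon> j * \<xi> (\<sigma> j)) (\<mu>(0:=\<mu> 0 - 1))))"
      using XG unfolding X_def by metis
  qed
qed

theorem mainTheorem10:
  fixes n m :: nat and q q0 q1 :: real and \<xi> :: "nat \<Rightarrow> real" and \<mu> :: "nat \<Rightarrow> int"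
  assumes "n \<ge> 1" and "m > 0"
    and "\<bar>q\<bar> < 1" and "\<bar>q0\<bar> < 1" and "\<bar>q1\<bar> < 1"
    and "\<forall>j<n. \<forall>z::int. \<xi> j \<noteq> pi * of_int z"
    and "\<forall>j<n. \<forall>k<n. j \<noteq> k \<longrightarrow> (\<forall>z::int. \<xi> j + \<xi> k \<noteq> 2 * pi * of_int z \<and> \<xi> j - \<xi> k \<noteq> 2 * pi * of_int z)"
    and "\<forall>j<n. exp (2 * \<i> * of_nat (m + 1) * of_real (\<xi> j)) =
           (1 - of_real q0 * exp (\<i> * of_real (\<xi> j))) / (exp (\<i> * of_real (\<xi> j)) - of_real q0)
         * (1 - of_real q1 * exp (\<i> * of_real (\<xi> j))) / (exp (\<i> * of_real (\<xi> j)) - of_real q1)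
         * (\<Prod>k\<in>{..<n} - {j}.
              (1 - of_real q * exp (\<i> * of_real (\<xi> j + \<xi> k))) / (exp (\<i> * of_real (\<xi> j + \<xi> k)) - of_real q)
            * (1 - of_real q * exp (\<i> * of_real (\<xi> j - \<xi> k))) / (exp (\<i> * of_real (\<xi> j - \<xi> k)) - of_real q))"
    and "\<mu> 0 = int m + 1"
  shows "Pb n \<mu> \<xi> q q0 = of_real q1 * Pb n (\<mu>(0 := \<mu> 0 - 1)) \<xi> q q0"
proof -
  have "Pb n \<mu> \<xi> q q0 - of_real q1 * Pb n (\<mu>(0 := \<mu> 0 - 1)) \<xi> q q0
     = (\<Sum>\<sigma>\<in>{\<sigma>. \<sigma> permutes {..<n}}. \<Sum>\<epsilon>\<in>{..<n} \<rightarrow>\<^sub>E {1, -1::real}.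
      Cb n (\<lambda>j. \<epsilon> j * \<xi> (\<sigma> j)) q q0 * Ee n (\<lambda>j. \<epsilon> j * \<xi> (\<sigma> j)) \<mu>
      - of_real q1 * (Cb n (\<lambda>j. \<epsilon> j * \<xi> (\<sigma> j)) q q0 * Ee n (\<lambda>j. \<epsilon> j * \<xi> (\<sigma> j)) (\<mu>(0:=\<mu> 0 - 1))))"
    unfolding Pb_alt by (simp add: sum_subtractf sum_distrib_left)
  also have "\<dots> = 0"
  proof (rule sum.neutral, rule ballI)
    fix \<sigma> assume "\<sigma> \<in> {\<sigma>. \<sigma> permutes {..<n}}"
    then have s: "\<sigma> permutes {..<n}" by simp
    show "(\<Sum>\<epsilon>\<in>{..<n} \<rightarrow>\<^sub>E {1, -1::real}.
      Cb n (\<lambda>j. \<epsilon> j * \<xi> (\<sigma> j)) q q0 * Ee n (\<lambda>j. \<epsilon> j * \<xi> (\<sigma> j)) \<mu>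
      - of_real q1 * (Cb n (\<lambda>j. \<epsilon> j * \<xi> (\<sigma> j)) q q0 * Ee n (\<lambda>j. \<epsilon> j * \<xi> (\<sigma> j)) (\<mu>(0:=\<mu> 0 - 1)))) = 0"
      by (rule sigma_sum[where n=n and m=m and q=q and \<xi>=\<xi> and \<mu>=\<mu> and \<sigma>=\<sigma>,
            OF assms(1,3,4,5,6,7,8,9) s])
  qed
  finally show ?thesis by simp
qed

end
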